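(* Let $S=P_1,P_2,\dots$ be a module sequence for a disjunctive program $P$. If $S$ is inconsistent, then every module sequence for $P$ is inconsistent.
   Context: A disjunctive program is a set of rules $A_1\vee\dots\vee A_m\leftarrow L_1,\dots,L_n$ ($m>0$, $n\ge0$), $A_j$ atoms, $L_i$ atoms or negated atoms $\mathtt{not}\,A$, possibly with function symbols. $\mathsf{Ground}(P)$ is its ground instantiation. For a set $M$ of ground atoms, $P^M$ is obtained from $\mathsf{Ground}(P)$ by deleting rules having some $\mathtt{not}\,B$ in the body with $B\in M$ and deleting negative literals from the remaining rules; $M$ is a stable model iff it is a minimal Herbrand model of $P^M$. A program is consistent iff it has a stable model. The dependency graph has ground atoms as vertices and an edge $A\to B$ whenever some $r\in\mathsf{Ground}(P)$ has $A$ in its head and $B$ occurring in $r$ (body or head); $A$ depends on $B$ if there is a directed path from $A$ to $B$ (every atom depends on itself). With $GH$ the set of ground head atoms of $\mathsf{Ground}(P)$ and an enumeration $p_1,p_2,\dots$ of $GH$, the induced module sequence is $P_1=\{r\in\mathsf{Ground}(P)\mid p_1$ depends on some atom of $head(r)\}$, $P_{i+1}=P_i\cup\{r\in\mathsf{Ground}(P)\mid p_{i+1}$ depends on some atom of $head(r)\}$; a module sequence for $P$ is one induced by some enumeration of $GH$. It is inconsistent if some $P_i$ is inconsistent. *)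

theory Defs
  imports Main "HOL-Library.Extended_Nat"
begin

datatype ('f, 'v) trm = Var 'v | Fn 'f "('f, 'v) trm list"

datatype ('p, 'f, 'v) atom = Atom 'p "('f, 'v) trm list"

datatype ('p, 'f, 'v) lit = Pos "('p, 'f, 'v) atom" | Neg "('p, 'f, 'v) atom"

text \<open>A rule  A1 v ... v Am <- L1, ..., Ln\<close>
datatype ('p, 'f, 'v) rule =
  Rule (head: "('p, 'f, 'v) atom list") (body: "('p, 'f, 'v) lit list")

type_synonym ('p, 'f, 'v) program = "('p, 'f, 'v) rule set"

definition disj_program :: "('p, 'f, 'v) program \<Rightarrow> bool" where
  "disj_program P \<longleftrightarrow> (\<forall>r\<in>P. head r \<noteq> [])"

fun ground_trm :: "('f, 'v) trm \<Rightarrow> bool" where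
  "ground_trm (Var x) = False"
| "ground_trm (Fn f ts) = (\<forall>t\<in>set ts. ground_trm t)"

fun ground_atom :: "('p, 'f, 'v) atom \<Rightarrow> bool" where
  "ground_atom (Atom q ts) = (\<forall>t\<in>set ts. ground_trm t)"

fun subst_trm :: "('v \<Rightarrow> ('f, 'v) trm) \<Rightarrow> ('f, 'v) trm \<Rightarrow> ('f, 'v) trm" where
  "subst_trm \<sigma> (Var x) = \<sigma> x"
| "subst_trm \<sigma> (Fn f ts) = Fn f (map (subst_trm \<sigma>) ts)"

fun subst_atom :: "('v \<Rightarrow> ('f, 'v) trm) \<Rightarrow> ('p, 'f, 'v) atom \<Rightarrow> ('p, 'f, 'v) atom" where
  "subst_atom \<sigma> (Atom q ts) = Atom q (map (subst_trm \<sigma>) ts)"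

fun subst_lit :: "('v \<Rightarrow> ('f, 'v) trm) \<Rightarrow> ('p, 'f, 'v) lit \<Rightarrow> ('p, 'f, 'v) lit" where
  "subst_lit \<sigma> (Pos a) = Pos (subst_atom \<sigma> a)"
| "subst_lit \<sigma> (Neg a) = Neg (subst_atom \<sigma> a)"

fun subst_rule :: "('v \<Rightarrow> ('f, 'v) trm) \<Rightarrow> ('p, 'f, 'v) rule \<Rightarrow> ('p, 'f, 'v) rule" where
  "subst_rule \<sigma> (Rule hs bs) = Rule (map (subst_atom \<sigma>) hs) (map (subst_lit \<sigma>) bs)"

definition ground_subst :: "('v \<Rightarrow> ('f, 'v) trm) \<Rightarrow> bool" where
  "ground_subst \<sigma> \<longleftrightarrow> (\<forall>x. ground_trm (\<sigma> x))"

definition Ground :: "('p, 'f, 'v) program \<Rightarrow> ('p, 'f, 'v) program" where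
  "Ground P = {subst_rule \<sigma> r | r \<sigma>. r \<in> P \<and> ground_subst \<sigma>}"

definition pos_body :: "('p, 'f, 'v) rule \<Rightarrow> ('p, 'f, 'v) atom set" where
  "pos_body r = {a. Pos a \<in> set (body r)}"

definition neg_body :: "('p, 'f, 'v) rule \<Rightarrow> ('p, 'f, 'v) atom set" where
  "neg_body r = {a. Neg a \<in> set (body r)}"

definition reduct :: "('p, 'f, 'v) program \<Rightarrow> ('p, 'f, 'v) atom set \<Rightarrow> ('p, 'f, 'v) program" where
  "reduct P M = {Rule (head r) [l \<leftarrow> body r. case l of Pos _ \<Rightarrow> True | Neg _ \<Rightarrow> False] | r.
                   r \<in> Ground P \<and> neg_body r \<inter> M = {}}"

definition herbrand_interp :: "('p, 'f, 'v) atom set \<Rightarrow> bool" where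
  "herbrand_interp M \<longleftrightarrow> (\<forall>a\<in>M. ground_atom a)"

definition is_model :: "('p, 'f, 'v) program \<Rightarrow> ('p, 'f, 'v) atom set \<Rightarrow> bool" where
  "is_model Q M \<longleftrightarrow> (\<forall>r\<in>Q. pos_body r \<subseteq> M \<and> neg_body r \<inter> M = {} \<longrightarrow> set (head r) \<inter> M \<noteq> {})"

definition minimal_herbrand_model :: "('p, 'f, 'v) program \<Rightarrow> ('p, 'f, 'v) atom set \<Rightarrow> bool" where
  "minimal_herbrand_model Q M \<longleftrightarrow> herbrand_interp M \<and> is_model Q M \<and>
     (\<forall>N. herbrand_interp N \<and> N \<subset> M \<longrightarrow> \<not> is_model Q N)"

definition stable_model :: "('p, 'f, 'v) program \<Rightarrow> ('p, 'f, 'v) atom set \<Rightarrow> bool" where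
  "stable_model P M \<longleftrightarrow> minimal_herbrand_model (reduct P M) M"

definition consistent :: "('p, 'f, 'v) program \<Rightarrow> bool" where
  "consistent P \<longleftrightarrow> (\<exists>M. stable_model P M)"

definition atoms_of_rule :: "('p, 'f, 'v) rule \<Rightarrow> ('p, 'f, 'v) atom set" where
  "atoms_of_rule r = set (head r) \<union> pos_body r \<union> neg_body r"

definition dep_edges :: "('p, 'f, 'v) program \<Rightarrow> (('p, 'f, 'v) atom \<times> ('p, 'f, 'v) atom) set" where
  "dep_edges P = {(A, B). \<exists>r\<in>Ground P. A \<in> set (head r) \<and> B \<in> atoms_of_rule r}"

definition depends :: "('p, 'f, 'v) program \<Rightarrow> ('p, 'f, 'v) atom \<Rightarrow> ('p, 'f, 'v) atom \<Rightarrow> bool" where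
  "depends P A B \<longleftrightarrow> (A, B) \<in> (dep_edges P)\<^sup>*"

definition GH :: "('p, 'f, 'v) program \<Rightarrow> ('p, 'f, 'v) atom set" where
  "GH P = (\<Union>r\<in>Ground P. set (head r))"

text \<open>An enumeration of GH is a bijection from an initial segment {i. i < n} of nat
  (n possibly infinite) onto GH; indices start at 0 (p 0 is p_1).\<close>
definition enumeration :: "('p, 'f, 'v) program \<Rightarrow> enat \<Rightarrow> (nat \<Rightarrow> ('p, 'f, 'v) atom) \<Rightarrow> bool" where
  "enumeration P n p \<longleftrightarrow> bij_betw p {i. enat i < n} (GH P)"

text \<open>The i-th module (P_{i+1} in the paper's 1-based indexing).\<close>
definition module :: "('p, 'f, 'v) program \<Rightarrow> (nat \<Rightarrow> ('p, 'f, 'v) atom) \<Rightarrow> nat \<Rightarrow> ('p, 'f, 'v) program" where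
  "module P p i = {r \<in> Ground P. \<exists>j\<le>i. \<exists>A\<in>set (head r). depends P (p j) A}"

definition inconsistent_seq :: "('p, 'f, 'v) program \<Rightarrow> enat \<Rightarrow> (nat \<Rightarrow> ('p, 'f, 'v) atom) \<Rightarrow> bool" where
  "inconsistent_seq P n p \<longleftrightarrow> (\<exists>i. enat i < n \<and> \<not> consistent (module P p i))"

end

theory Submission
  imports Defs
begin

lemma ground_trm_subst_id: "ground_trm s \<Longrightarrow> subst_trm \<tau> s = s"
  by (induction s) (auto simp: map_idI)

lemma subst_trm_twice: "ground_subst \<sigma> \<Longrightarrow> subst_trm \<tau> (subst_trm \<sigma> t) = subst_trm \<sigma> t"
  by (induction t) (auto simp: ground_subst_def ground_trm_subst_id)

lemma subst_atom_twice: "ground_subst \<sigma> \<Longrightarrow> subst_atom \<tau> (subst_atom \<sigma> a) = subst_atom \<sigma> a"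
  by (cases a) (auto simp: subst_trm_twice)

lemma subst_lit_twice: "ground_subst \<sigma> \<Longrightarrow> subst_lit \<tau> (subst_lit \<sigma> a) = subst_lit \<sigma> a"
  by (cases a) (auto simp: subst_atom_twice)

lemma subst_rule_twice: "ground_subst \<sigma> \<Longrightarrow> subst_rule \<tau> (subst_rule \<sigma> r) = subst_rule \<sigma> r"
  by (cases r) (auto simp: subst_atom_twice subst_lit_twice)

lemma Ground_idem:
  fixes X :: "('p, 'f, 'v) program"
  assumes "X \<subseteq> Ground P" shows "Ground X = X"
proof
  show "Ground X \<subseteq> X"
  proof
    fix x assume "x \<in> Ground X"
    then obtain r \<tau> where r: "r \<in> X" "x = subst_rule \<tau> r" unfolding Ground_def by auto
    then obtain r0 \<sigma> where "ground_subst \<sigma>" "r = subst_rule \<sigma> r0"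
      using assms unfolding Ground_def by auto
    then show "x \<in> X" using r subst_rule_twice by metis
  qed
next
  show "X \<subseteq> Ground X"
  proof
    fix x assume x: "x \<in> X"
    obtain \<rho> :: "'v \<Rightarrow> ('f,'v) trm" where g: "ground_subst \<rho>"
      using ground_subst_def[of "\<lambda>_. Fn undefined []"] by auto
    obtain r0 \<sigma> where "ground_subst \<sigma>" "x = subst_rule \<sigma> r0"
      using x assms unfolding Ground_def by auto
    then have "subst_rule \<rho> x = x" using subst_rule_twice by metis
    then show "x \<in> Ground X" unfolding Ground_def using x g by (metis (mono_tags, lifting) mem_Collect_eq)
  qed
qed

definition strip :: "('p, 'f, 'v) rule \<Rightarrow> ('p, 'f, 'v) rule" where
  "strip r = Rule (head r) [l \<leftarrow> body r. case l of Pos _ \<Rightarrow> True | Neg _ \<Rightarrow> False]"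

lemma strip_pos[simp]: "pos_body (strip r) = pos_body r"
  by (auto simp: strip_def pos_body_def)

lemma strip_neg[simp]: "neg_body (strip r) = {}"
  by (auto simp: strip_def neg_body_def)

lemma strip_head[simp]: "head (strip r) = head r"
  by (auto simp: strip_def)

lemma reduct_strip: "reduct P M = strip ` {r \<in> Ground P. neg_body r \<inter> M = {}}"
  unfolding reduct_def strip_def by auto

lemma splitting:
  assumes GQ: "Ground Q = Q" and GB: "Ground B = B" and sub: "B \<subseteq> Q"
    and clo: "\<forall>r\<in>B. atoms_of_rule r \<subseteq> U"
    and rest: "\<forall>r\<in>Q - B. set (head r) \<inter> U = {}"
    and st: "stable_model Q M"
  shows "stable_model B (M \<inter> U)"
proof -
  have hM: "herbrand_interp M" and mM: "is_model (reduct Q M) M"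
    and minM: "\<And>N. herbrand_interp N \<Longrightarrow> N \<subset> M \<Longrightarrow> \<not> is_model (reduct Q M) N"
    using st unfolding stable_model_def minimal_herbrand_model_def by auto
  have RQ: "reduct Q M = strip ` {r \<in> Q. neg_body r \<inter> M = {}}" using reduct_strip[of Q M] GQ by simp
  have atB: "\<And>r. r \<in> B \<Longrightarrow> set (head r) \<subseteq> U \<and> pos_body r \<subseteq> U \<and> neg_body r \<subseteq> U"
    using clo unfolding atoms_of_rule_def by auto
  have RB: "reduct B (M \<inter> U) = strip ` {r \<in> B. neg_body r \<inter> M = {}}"
  proof -
    have "{r \<in> B. neg_body r \<inter> (M \<inter> U) = {}} = {r \<in> B. neg_body r \<inter> M = {}}"
      using atB by fastforce
    then show ?thesis using reduct_strip[of B "M \<inter> U"] GB by simp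
  qed
  let ?X = "M \<inter> U"
  have hX: "herbrand_interp ?X" using hM unfolding herbrand_interp_def by auto
  have mX: "is_model (reduct B ?X) ?X"
    unfolding is_model_def RB
  proof (intro ballI impI)
    fix s assume s: "s \<in> strip ` {r \<in> B. neg_body r \<inter> M = {}}"
      and pb: "pos_body s \<subseteq> ?X \<and> neg_body s \<inter> ?X = {}"
    then obtain r where r: "r \<in> B" "neg_body r \<inter> M = {}" "s = strip r" by auto
    have "s \<in> reduct Q M" using RQ r sub by auto
    moreover have "pos_body s \<subseteq> M" "neg_body s \<inter> M = {}" using pb r by auto
    ultimately have "set (head s) \<inter> M \<noteq> {}" using mM unfolding is_model_def by blast
    then show "set (head s) \<inter> ?X \<noteq> {}" using atB[OF r(1)] r by auto
  qed
  have minX: "\<not> is_model (reduct B ?X) N" if hN: "herbrand_interp N" and NX: "N \<subset> ?X" for N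
  proof
    assume mN: "is_model (reduct B ?X) N"
    let ?N' = "N \<union> (M - U)"
    have h': "herbrand_interp ?N'" using hN hM unfolding herbrand_interp_def by auto
    have sub': "?N' \<subset> M" using NX by blast
    have "is_model (reduct Q M) ?N'"
      unfolding is_model_def RQ
    proof (intro ballI impI)
      fix s assume s: "s \<in> strip ` {r \<in> Q. neg_body r \<inter> M = {}}"
        and pb: "pos_body s \<subseteq> ?N' \<and> neg_body s \<inter> ?N' = {}"
      then obtain r where r: "r \<in> Q" "neg_body r \<inter> M = {}" "s = strip r" by auto
      show "set (head s) \<inter> ?N' \<noteq> {}"
      proof (cases "r \<in> B")
        case True
        then have "pos_body r \<subseteq> U" using atB by blast
        then have "pos_body s \<subseteq> N" using pb r by auto
        moreover have "s \<in> reduct B ?X" using RB r True by auto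
        moreover have "neg_body s \<inter> N = {}" using r by simp
        ultimately have "set (head s) \<inter> N \<noteq> {}" using mN unfolding is_model_def by blast
        then show ?thesis by auto
      next
        case False
        have "s \<in> reduct Q M" using RQ r by auto
        moreover have "pos_body s \<subseteq> M" using pb sub' by auto
        moreover have "neg_body s \<inter> M = {}" using r by simp
        ultimately have "set (head s) \<inter> M \<noteq> {}" using mM unfolding is_model_def by blast
        moreover have "set (head s) \<inter> U = {}" using rest r False by auto
        ultimately show ?thesis by auto
      qed
    qed
    then show False using minM h' sub' by blast
  qed
  show ?thesis unfolding stable_model_def minimal_herbrand_model_def
    using hX mX minX by simp
qed

definition UU :: "('p, 'f, 'v) program \<Rightarrow> (nat \<Rightarrow> ('p, 'f, 'v) atom) \<Rightarrow> nat \<Rightarrow> ('p, 'f, 'v) atom set" where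
  "UU P p i = {A. \<exists>k\<le>i. depends P (p k) A}"

lemma module_UU: "module P p i = {r \<in> Ground P. set (head r) \<inter> UU P p i \<noteq> {}}"
  unfolding module_def UU_def by auto

lemma UU_closed:
  assumes "r \<in> Ground P" "A \<in> set (head r)" "A \<in> UU P p i" "B \<in> atoms_of_rule r"
  shows "B \<in> UU P p i"
proof -
  have "(A, B) \<in> dep_edges P" using assms unfolding dep_edges_def by auto
  then show ?thesis using assms(3) unfolding UU_def depends_def
    using rtrancl.rtrancl_into_rtrancl by fastforce
qed

theorem theorem3p9:
  fixes P :: "('p, 'f, 'v) program"
  assumes "disj_program P"
    and "enumeration P n p" and "inconsistent_seq P n p"
    and "enumeration P n' p'"
  shows "inconsistent_seq P n' p'"
proof -
  obtain i where i: "enat i < n" "\<not> consistent (module P p i)"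
    using assms(3) unfolding inconsistent_seq_def by auto
  have bp: "bij_betw p {i. enat i < n} (GH P)" and bp': "bij_betw p' {i. enat i < n'} (GH P)"
    using assms(2,4) unfolding enumeration_def by auto
  have "\<forall>k. \<exists>m. k \<le> i \<longrightarrow> enat m < n' \<and> p' m = p k"
  proof (intro allI impI)
    fix k
    show "\<exists>m. k \<le> i \<longrightarrow> enat m < n' \<and> p' m = p k"
    proof (cases "k \<le> i")
      case True
      then have "enat k < n" using i(1) by (meson enat_ord_simps(1) le_less_trans)
      then have "p k \<in> GH P" using bp bij_betwE by blast
      then obtain m where "m \<in> {i. enat i < n'}" "p' m = p k"
        using bp' by (metis bij_betw_imp_surj_on imageE)
      then show ?thesis by auto
    qed auto
  qed
  then obtain m where m: "\<And>k. k \<le> i \<Longrightarrow> enat (m k) < n' \<and> p' (m k) = p k" by metis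
  define j where "j = Max (m ` {..i})"
  have fin: "finite (m ` {..i})" by auto
  have jin: "j \<in> m ` {..i}" unfolding j_def by (rule Max_in) auto
  then have jlt: "enat j < n'" using m by auto
  have mle: "k \<le> i \<Longrightarrow> m k \<le> j" for k unfolding j_def using fin by auto
  have UUsub: "UU P p i \<subseteq> UU P p' j"
  proof
    fix A assume "A \<in> UU P p i"
    then obtain k where k: "k \<le> i" "depends P (p k) A" unfolding UU_def by auto
    then have "depends P (p' (m k)) A" "m k \<le> j" using m mle by auto
    then show "A \<in> UU P p' j" unfolding UU_def by auto
  qed
  let ?Q = "module P p' j" and ?B = "module P p i" and ?U = "UU P p i"
  have QG: "?Q \<subseteq> Ground P" "?B \<subseteq> Ground P" unfolding module_def by auto
  have BQ: "?B \<subseteq> ?Q" using UUsub unfolding module_UU by auto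
  have clo: "\<forall>r\<in>?B. atoms_of_rule r \<subseteq> ?U"
  proof (intro ballI subsetI)
    fix r B assume r: "r \<in> ?B" and B: "B \<in> atoms_of_rule r"
    then obtain A where "r \<in> Ground P" "A \<in> set (head r)" "A \<in> ?U" unfolding module_UU by auto
    then show "B \<in> ?U" using UU_closed B by metis
  qed
  have rest: "\<forall>r\<in>?Q - ?B. set (head r) \<inter> ?U = {}"
    unfolding module_UU by auto
  have "\<not> consistent ?Q"
  proof
    assume "consistent ?Q"
    then obtain M where "stable_model ?Q M" unfolding consistent_def by auto
    then have "stable_model ?B (M \<inter> ?U)"
      using splitting[OF Ground_idem[OF QG(1)] Ground_idem[OF QG(2)] BQ clo rest] by blast
    then show False using i(2) unfolding consistent_def by auto
  qed
  then show ?thesis unfolding inconsistent_seq_def using jlt by auto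
qed

end
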